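(* Let $\mathcal{P}=\{P_1,\ldots,P_n\}$, let $\mathcal{Q}\subseteq 2^{\mathcal{P}}$ and let $\mathcal{F}\subseteq 2^{\mathcal{P}}$ be a fail-prone system. Let $I=\langle \xi_{\mathcal{Q}_{\bar X}},\ \xi_{\mathcal{Q}_{\bar Y}},\ \lambda,\ \delta\rangle\subseteq\mathbb{B}(\bar X,\bar Y,\bar T)$ and let $\mathcal{G}$ be a Gröbner basis for $I$. If $|SM(\mathcal{G})|=|\mathcal{Q}|^2\cdot|\mathcal{F}^*|$, then $\mathcal{Q}$ fulfills dissemination consistency with respect to $\mathcal{F}$, i.e. $Q_1\cap Q_2\not\subseteq F$ for all $Q_1,Q_2\in\mathcal{Q}$ and all $F\in\mathcal{F}$.
   Context: $\mathbb{B}=\mathbb{F}_2$; $\mathbb{B}(\bar X,\bar Y,\bar T)$ is the Boolean polynomial ring $\mathbb{B}[X_1,\ldots,X_n,Y_1,\ldots,Y_n,T_1,\ldots,T_n]$ modulo $\langle X_i^2-X_i,Y_i^2-Y_i,T_i^2-T_i\rangle$. $\varphi:2^{\mathcal{P}}\to\mathbb{B}^n$ sends a set to its indicator vector. For $S\subseteq\mathcal{P}$, $\xi_S(\bar Z)=\prod_{i=1}^n(1+Z_i+\varphi(S)_i)$; for $\mathcal{A}\subseteq 2^{\mathcal{P}}$, $\xi_{\mathcal{A}_{\bar Z}}=\prod_{A\in\mathcal{A}}(\xi_A(\bar Z)+1)$. $\gamma(\bar X,\bar Y)=\prod_{i=1}^n(X_iY_i+Y_i+1)+1$, and $\lambda(\bar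 T)=\prod_{F\in\mathcal{F}}\gamma(\varphi(F),\bar T)$. $\delta(\bar X,\bar Y,\bar T)=\prod_{i=1}^n(T_iX_iY_i+X_iY_i+1)$. $\mathcal{F}^*=\{F'\subseteq F: F\in\mathcal{F}\}$. A fail-prone system is a collection of subsets of $\mathcal{P}$ none of which is contained in another. Monomial order: lexicographic with block order $\bar T<\bar Y<\bar X$ and within each block $X_n\prec\cdots\prec X_1$ etc. A Gröbner basis of $I$ is a generating set $\mathcal{G}$ such that every nonzero $f\in I$ has leading monomial divisible by that of some $g\in\mathcal{G}$; $SM(\mathcal{G})$ is the set of multilinear monomials not in the ideal generated by the leading monomials of elements of $I$. *)

theory Defs
  imports Main
begin

text \<open>Processes are P_1..P_n, identified with indices 1..n. Variables X_i, Y_i, T_i.\<close>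

datatype var = X nat | Y nat | T nat

definition Vars :: "nat \<Rightarrow> var set" where
  "Vars n = {X i | i. 1 \<le> i \<and> i \<le> n} \<union> {Y i | i. 1 \<le> i \<and> i \<le> n} \<union> {T i | i. 1 \<le> i \<and> i \<le> n}"

text \<open>Elements of B(X,Y,T) = B[X,Y,T]/<v^2-v> are represented by their unique
multilinear (reduced) representative: a finite set of multilinear monomials, a
multilinear monomial being a set of variables.  Addition is symmetric difference,
multiplication multiplies monomials (union of variable sets, since v^2=v) and
reduces coefficients modulo 2.\<close>

type_synonym monom = "var set"
type_synonym bpoly = "monom set"

definition bpolys :: "nat \<Rightarrow> bpoly set" where
  "bpolys n = {p. p \<subseteq> Pow (Vars n)}"

definition bp_zero :: bpoly where "bp_zero = {}"
definition bp_one :: bpoly where "bp_one = {{}}"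
definition bp_var :: "var \<Rightarrow> bpoly" where "bp_var v = {{v}}"
definition bp_const :: "bool \<Rightarrow> bpoly" where "bp_const b = (if b then bp_one else bp_zero)"

definition bp_add :: "bpoly \<Rightarrow> bpoly \<Rightarrow> bpoly" where
  "bp_add p q = (p - q) \<union> (q - p)"

definition bp_mult :: "bpoly \<Rightarrow> bpoly \<Rightarrow> bpoly" where
  "bp_mult p q = {m. odd (card {(a, b). a \<in> p \<and> b \<in> q \<and> a \<union> b = m})}"

definition bp_prod_idx :: "nat \<Rightarrow> (nat \<Rightarrow> bpoly) \<Rightarrow> bpoly" where
  "bp_prod_idx n f = foldr (\<lambda>i acc. bp_mult (f i) acc) [1..<Suc n] bp_one"

definition bp_prod_set :: "('a \<Rightarrow> bpoly) \<Rightarrow> 'a set \<Rightarrow> bpoly" where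
  "bp_prod_set f A = Finite_Set.fold (\<lambda>a acc. bp_mult (f a) acc) bp_one A"

inductive_set bideal :: "nat \<Rightarrow> bpoly set \<Rightarrow> bpoly set" for n :: nat and G :: "bpoly set" where
  zero: "bp_zero \<in> bideal n G"
| gen: "g \<in> G \<Longrightarrow> g \<in> bideal n G"
| add: "a \<in> bideal n G \<Longrightarrow> b \<in> bideal n G \<Longrightarrow> bp_add a b \<in> bideal n G"
| mult: "a \<in> bideal n G \<Longrightarrow> r \<in> bpolys n \<Longrightarrow> bp_mult r a \<in> bideal n G"

text \<open>Lexicographic order with block order T < Y < X and within each block
X_n < ... < X_1 (similarly for Y, T).  key gives the position of a variable in
this total order on Vars n (larger key = larger variable).\<close>

fun vkey :: "nat \<Rightarrow> var \<Rightarrow> nat" where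
  "vkey n (T i) = n + 1 - i"
| "vkey n (Y i) = (n + 1) + (n + 1 - i)"
| "vkey n (X i) = 2 * (n + 1) + (n + 1 - i)"

definition mono_less :: "nat \<Rightarrow> monom \<Rightarrow> monom \<Rightarrow> bool" where
  "mono_less n m1 m2 \<longleftrightarrow> m1 \<noteq> m2 \<and>
     (\<exists>v \<in> m2 - m1. \<forall>u \<in> (m1 - m2) \<union> (m2 - m1). u \<noteq> v \<longrightarrow> vkey n u < vkey n v)"

definition LM :: "nat \<Rightarrow> bpoly \<Rightarrow> monom" where
  "LM n p = (THE m. m \<in> p \<and> (\<forall>m' \<in> p. m' \<noteq> m \<longrightarrow> mono_less n m' m))"

definition is_groebner_basis :: "nat \<Rightarrow> bpoly set \<Rightarrow> bpoly set \<Rightarrow> bool" where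
  "is_groebner_basis n G I \<longleftrightarrow> G \<subseteq> bpolys n \<and> bideal n G = I \<and>
     (\<forall>f \<in> I. f \<noteq> bp_zero \<longrightarrow> (\<exists>g \<in> G. g \<noteq> bp_zero \<and> LM n g \<subseteq> LM n f))"

definition SM :: "nat \<Rightarrow> bpoly set \<Rightarrow> monom set" where
  "SM n I = {m. m \<subseteq> Vars n \<and> {m} \<notin> bideal n {{LM n f} | f. f \<in> I \<and> f \<noteq> bp_zero}}"

definition phi :: "nat set \<Rightarrow> nat \<Rightarrow> bpoly" where
  "phi S i = bp_const (i \<in> S)"

definition xi :: "nat \<Rightarrow> nat set \<Rightarrow> (nat \<Rightarrow> bpoly) \<Rightarrow> bpoly" where
  "xi n S Z = bp_prod_idx n (\<lambda>i. bp_add (bp_add bp_one (Z i)) (phi S i))"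

definition xi_sys :: "nat \<Rightarrow> nat set set \<Rightarrow> (nat \<Rightarrow> bpoly) \<Rightarrow> bpoly" where
  "xi_sys n \<A> Z = bp_prod_set (\<lambda>A. bp_add (xi n A Z) bp_one) \<A>"

definition gamma :: "nat \<Rightarrow> (nat \<Rightarrow> bpoly) \<Rightarrow> (nat \<Rightarrow> bpoly) \<Rightarrow> bpoly" where
  "gamma n Xs Ys = bp_add (bp_prod_idx n (\<lambda>i. bp_add (bp_add (bp_mult (Xs i) (Ys i)) (Ys i)) bp_one)) bp_one"

definition lambda_poly :: "nat \<Rightarrow> nat set set \<Rightarrow> bpoly" where
  "lambda_poly n \<F> = bp_prod_set (\<lambda>F. gamma n (phi F) (\<lambda>i. bp_var (T i))) \<F>"

definition delta_poly :: "nat \<Rightarrow> bpoly" where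
  "delta_poly n = bp_prod_idx n (\<lambda>i. bp_add (bp_add
      (bp_mult (bp_var (T i)) (bp_mult (bp_var (X i)) (bp_var (Y i))))
      (bp_mult (bp_var (X i)) (bp_var (Y i)))) bp_one)"

definition the_ideal :: "nat \<Rightarrow> nat set set \<Rightarrow> nat set set \<Rightarrow> bpoly set" where
  "the_ideal n \<Q> \<F> = bideal n {xi_sys n \<Q> (\<lambda>i. bp_var (X i)), xi_sys n \<Q> (\<lambda>i. bp_var (Y i)),
                                 lambda_poly n \<F>, delta_poly n}"

definition fail_prone :: "nat \<Rightarrow> nat set set \<Rightarrow> bool" where
  "fail_prone n \<F> \<longleftrightarrow> (\<forall>F \<in> \<F>. F \<subseteq> {1..n}) \<and> (\<forall>A \<in> \<F>. \<forall>B \<in> \<F>. A \<subseteq> B \<longrightarrow> A = B)"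

definition downclosure :: "nat set set \<Rightarrow> nat set set" where
  "downclosure \<F> = {F'. \<exists>F \<in> \<F>. F' \<subseteq> F}"

end

theory Submission
  imports Defs "HOL-Library.FuncSet"
begin

definition sat :: "(var \<Rightarrow> bool) \<Rightarrow> monom \<Rightarrow> bool" where
  "sat s m = (\<forall>v\<in>m. s v)"
definition ev :: "(var \<Rightarrow> bool) \<Rightarrow> bpoly \<Rightarrow> bool" where
  "ev s p = odd (card {m\<in>p. sat s m})"

lemma Vars_eq: "Vars n = X ` {1..n} \<union> Y ` {1..n} \<union> T ` {1..n}"
  unfolding Vars_def by auto

lemma finite_Vars[simp]: "finite (Vars n)"
  by (simp add: Vars_eq)

lemma bpolys_finite: "p \<in> bpolys n \<Longrightarrow> finite p"
  unfolding bpolys_def by (auto intro: finite_subset)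

lemma bpolys_mono_sub: "p \<in> bpolys n \<Longrightarrow> m \<in> p \<Longrightarrow> m \<subseteq> Vars n"
  unfolding bpolys_def by auto

lemma sat_Un[simp]: "sat s (a \<union> b) = (sat s a \<and> sat s b)"
  unfolding sat_def by auto

lemma ev_zero[simp]: "ev s bp_zero = False"
  by (simp add: ev_def bp_zero_def)
lemma ev_one[simp]: "ev s bp_one = True"
proof -
  have "{m\<in>{{}}. sat s m} = {{}}" by (auto simp: sat_def)
  then show ?thesis by (simp add: ev_def bp_one_def)
qed
lemma ev_var[simp]: "ev s (bp_var v) = s v"
proof -
  have "{m\<in>{{v}}. sat s m} = (if s v then {{v}} else {})" by (auto simp: sat_def)
  then show ?thesis by (simp add: ev_def bp_var_def)
qed
lemma ev_const[simp]: "ev s (bp_const b) = b"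
  by (simp add: bp_const_def)

lemma card_symdiff:
  assumes "finite A" "finite B"
  shows "card ((A - B) \<union> (B - A)) + 2 * card (A \<inter> B) = card A + card B"
proof -
  have "card ((A - B) \<union> (B - A)) = card (A - B) + card (B - A)"
    by (rule card_Un_disjoint) (use assms in auto)
  moreover have "card (A - B) + card (A \<inter> B) = card A"
    using assms card_Diff_subset_Int[of A B] card_mono[of A "A \<inter> B"] by simp
  moreover have "card (B - A) + card (A \<inter> B) = card B"
    using assms card_Diff_subset_Int[of B A] card_mono[of B "A \<inter> B"] by (simp add: Int_commute)
  ultimately show ?thesis by simp
qed

lemma ev_add:
  assumes "finite p" "finite q"
  shows "ev s (bp_add p q) = (ev s p \<noteq> ev s q)"
proof -
  let ?A = "{m\<in>p. sat s m}" and ?B = "{m\<in>q. sat s m}"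
  have e: "{m \<in> bp_add p q. sat s m} = (?A - ?B) \<union> (?B - ?A)"
    unfolding bp_add_def by auto
  have "card ((?A - ?B) \<union> (?B - ?A)) + 2 * card (?A \<inter> ?B) = card ?A + card ?B"
    by (rule card_symdiff) (use assms in auto)
  moreover have "\<forall>x a b c::nat. x + 2*c = a + b \<longrightarrow> odd x = (odd a \<noteq> odd b)" by presburger
  ultimately show ?thesis unfolding ev_def e by blast
qed

lemma even_sum_card:
  assumes "finite U"
  shows "even (\<Sum>m\<in>U. c m :: nat) = even (card {m\<in>U. odd (c m)})"
  using assms
proof (induction U rule: finite_induct)
  case empty then show ?case by simp
next
  case (insert x F)
  have "{m\<in>insert x F. odd (c m)} = (if odd (c x) then insert x {m\<in>F. odd (c m)} else {m\<in>F. odd (c m)})"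
    by auto
  then show ?case using insert by auto
qed

lemma ev_mult:
  assumes "finite p" "finite q"
  shows "ev s (bp_mult p q) = (ev s p \<and> ev s q)"
proof -
  let ?A = "{m\<in>p. sat s m}" and ?B = "{m\<in>q. sat s m}"
  define C where "C = {(x,y). x \<in> p \<and> y \<in> q \<and> sat s (x \<union> y)}"
  define fib where "fib m = {(a, b). a \<in> p \<and> b \<in> q \<and> a \<union> b = m}" for m
  define U where "U = (\<lambda>(x,y). x \<union> y) ` C"
  have C1: "C = ?A \<times> ?B" unfolding C_def by auto
  have finC: "finite C" unfolding C1 using assms by auto
  have finU: "finite U" unfolding U_def using finC by auto
  have C2: "C = (\<Union>m\<in>U. fib m)" unfolding C_def U_def fib_def by (auto simp del: sat_Un)
  have "card C = (\<Sum>m\<in>U. card (fib m))"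
    unfolding C2
  proof (rule card_UN_disjoint[OF finU])
    show "\<forall>i\<in>U. finite (fib i)"
    proof
      fix i show "finite (fib i)"
        by (rule finite_subset[of _ "p \<times> q"]) (use assms in \<open>auto simp: fib_def\<close>)
    qed
    show "\<forall>i\<in>U. \<forall>j\<in>U. i \<noteq> j \<longrightarrow> fib i \<inter> fib j = {}"
      unfolding fib_def by auto
  qed
  then have h1: "odd (card C) = odd (card {m\<in>U. odd (card (fib m))})"
    using even_sum_card[OF finU, of "\<lambda>m. card (fib m)"] by simp
  have h2: "{m\<in>U. odd (card (fib m))} = {m \<in> bp_mult p q. sat s m}"
  proof
    show "{m\<in>U. odd (card (fib m))} \<subseteq> {m \<in> bp_mult p q. sat s m}"
      unfolding U_def C_def bp_mult_def fib_def by (auto simp del: sat_Un)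
    show "{m \<in> bp_mult p q. sat s m} \<subseteq> {m\<in>U. odd (card (fib m))}"
    proof
      fix m assume m: "m \<in> {m \<in> bp_mult p q. sat s m}"
      then have o: "odd (card (fib m))" unfolding bp_mult_def fib_def by simp
      then have "fib m \<noteq> {}" by (metis card.empty even_zero)
      then obtain x y where "x \<in> p" "y \<in> q" "x \<union> y = m" unfolding fib_def by auto
      then have "m \<in> U" using m unfolding U_def C_def by (auto intro!: image_eqI[of _ _ "(x,y)"])
      then show "m \<in> {m\<in>U. odd (card (fib m))}" using o by blast
    qed
  qed
  have h3: "card C = card ?A * card ?B" unfolding C1 by (rule card_cartesian_product)
  have "ev s (bp_mult p q) = odd (card C)" unfolding ev_def using h1 h2 by metis
  also have "\<dots> = (odd (card ?A) \<and> odd (card ?B))" unfolding h3 by simp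
  finally show ?thesis unfolding ev_def .
qed


lemma bpolys_add[simp]: "p \<in> bpolys n \<Longrightarrow> q \<in> bpolys n \<Longrightarrow> bp_add p q \<in> bpolys n"
  unfolding bpolys_def bp_add_def by auto

lemma bpolys_mult[simp]: "p \<in> bpolys n \<Longrightarrow> q \<in> bpolys n \<Longrightarrow> bp_mult p q \<in> bpolys n"
proof -
  assume p: "p \<in> bpolys n" and q: "q \<in> bpolys n"
  show ?thesis unfolding bpolys_def
  proof (rule CollectI, rule subsetI)
    fix m assume "m \<in> bp_mult p q"
    then have "odd (card {(a, b). a \<in> p \<and> b \<in> q \<and> a \<union> b = m})" unfolding bp_mult_def by simp
    then have "{(a, b). a \<in> p \<and> b \<in> q \<and> a \<union> b = m} \<noteq> {}" by (metis card.empty even_zero)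
    then obtain a b where "a \<in> p" "b \<in> q" "a \<union> b = m" by auto
    then show "m \<in> Pow (Vars n)" using p q unfolding bpolys_def by auto
  qed
qed

lemma bpolys_one[simp]: "bp_one \<in> bpolys n"
  unfolding bpolys_def bp_one_def by auto
lemma bpolys_zero[simp]: "bp_zero \<in> bpolys n"
  unfolding bpolys_def bp_zero_def by auto
lemma bpolys_const[simp]: "bp_const b \<in> bpolys n"
  unfolding bp_const_def by auto
lemma bpolys_var: "v \<in> Vars n \<Longrightarrow> bp_var v \<in> bpolys n"
  unfolding bpolys_def bp_var_def by auto
lemma bpolys_X[simp]: "1 \<le> i \<Longrightarrow> i \<le> n \<Longrightarrow> bp_var (X i) \<in> bpolys n"
  by (rule bpolys_var) (auto simp: Vars_def)
lemma bpolys_Y[simp]: "1 \<le> i \<Longrightarrow> i \<le> n \<Longrightarrow> bp_var (Y i) \<in> bpolys n"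
  by (rule bpolys_var) (auto simp: Vars_def)
lemma bpolys_T[simp]: "1 \<le> i \<Longrightarrow> i \<le> n \<Longrightarrow> bp_var (T i) \<in> bpolys n"
  by (rule bpolys_var) (auto simp: Vars_def)

lemma ev_add'[simp]: "p \<in> bpolys n \<Longrightarrow> q \<in> bpolys n \<Longrightarrow> ev s (bp_add p q) = (ev s p \<noteq> ev s q)"
  by (rule ev_add) (auto dest: bpolys_finite)
lemma ev_mult'[simp]: "p \<in> bpolys n \<Longrightarrow> q \<in> bpolys n \<Longrightarrow> ev s (bp_mult p q) = (ev s p \<and> ev s q)"
  by (rule ev_mult) (auto dest: bpolys_finite)

lemma ev_zero_imp_empty:
  assumes r: "r \<in> bpolys n" and z: "\<And>s. \<not> ev s r"
  shows "r = {}"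
proof (rule ccontr)
  assume ne: "r \<noteq> {}"
  have fr: "finite r" using r by (rule bpolys_finite)
  obtain m where m: "m \<in> r" and mmin: "\<forall>b\<in>r. b \<le> m \<longrightarrow> m = b"
    using finite_has_minimal[OF fr ne] by blast
  let ?s = "\<lambda>v. v \<in> m"
  have "{m'\<in>r. sat ?s m'} = {m}"
    using m mmin unfolding sat_def by auto
  then have "ev ?s r" unfolding ev_def by simp
  with z show False by blast
qed

lemma ev_inj:
  assumes "p \<in> bpolys n" "q \<in> bpolys n" "\<And>s. ev s p = ev s q"
  shows "p = q"
proof -
  have "bp_add p q = {}"
    by (rule ev_zero_imp_empty[of _ n]) (use assms in auto)
  then show ?thesis unfolding bp_add_def by auto
qed

lemma foldr_prod:
  assumes "\<forall>i\<in>set l. f i \<in> bpolys n"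
  shows "foldr (\<lambda>i acc. bp_mult (f i) acc) l bp_one \<in> bpolys n \<and>
         (\<forall>s. ev s (foldr (\<lambda>i acc. bp_mult (f i) acc) l bp_one) = (\<forall>i\<in>set l. ev s (f i)))"
  using assms by (induction l) auto

lemma prod_idx:
  assumes "\<And>i. 1 \<le> i \<Longrightarrow> i \<le> n \<Longrightarrow> f i \<in> bpolys n"
  shows "bp_prod_idx n f \<in> bpolys n"
    and "ev s (bp_prod_idx n f) = (\<forall>i\<in>{1..n}. ev s (f i))"
proof -
  have a: "\<forall>i\<in>set [1..<Suc n]. f i \<in> bpolys n" using assms by auto
  show "bp_prod_idx n f \<in> bpolys n" using foldr_prod[OF a] unfolding bp_prod_idx_def by blast
  have "set [1..<Suc n] = {1..n}" by auto
  then show "ev s (bp_prod_idx n f) = (\<forall>i\<in>{1..n}. ev s (f i))"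
    using foldr_prod[OF a] unfolding bp_prod_idx_def by metis
qed

lemma fold_graph_prod:
  assumes "fold_graph (\<lambda>a acc. bp_mult (f a) acc) bp_one A y" "\<forall>a\<in>A. f a \<in> bpolys n"
  shows "y \<in> bpolys n \<and> (\<forall>s. ev s y = (\<forall>a\<in>A. ev s (f a)))"
  using assms by (induction rule: fold_graph.induct) auto

lemma prod_set:
  assumes "finite A" "\<And>a. a \<in> A \<Longrightarrow> f a \<in> bpolys n"
  shows "bp_prod_set f A \<in> bpolys n"
    and "ev s (bp_prod_set f A) = (\<forall>a\<in>A. ev s (f a))"
proof -
  let ?g = "\<lambda>a acc. bp_mult (f a) acc"
  obtain y where y: "fold_graph ?g bp_one A y" using finite_imp_fold_graph[OF assms(1), where f="?g" and z=bp_one] by blast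
  have fa: "\<forall>a\<in>A. f a \<in> bpolys n" using assms(2) by blast
  have yp: "y \<in> bpolys n \<and> (\<forall>s. ev s y = (\<forall>a\<in>A. ev s (f a)))" by (rule fold_graph_prod[OF y fa])
  have "(THE y. fold_graph ?g bp_one A y) = y"
  proof (rule the_equality)
    show "fold_graph ?g bp_one A y" by (rule y)
    fix y' assume "fold_graph ?g bp_one A y'"
    then have "y' \<in> bpolys n \<and> (\<forall>s. ev s y' = (\<forall>a\<in>A. ev s (f a)))" by (rule fold_graph_prod[OF _ fa])
    then show "y' = y" using yp by (intro ev_inj[of _ n]) auto
  qed
  then have e: "bp_prod_set f A = y" unfolding bp_prod_set_def Finite_Set.fold_def using assms(1) by simp
  show "bp_prod_set f A \<in> bpolys n" using e yp by simp
  show "ev s (bp_prod_set f A) = (\<forall>a\<in>A. ev s (f a))" using e yp by simp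
qed


lemma vkey_inj: "u \<in> Vars n \<Longrightarrow> v \<in> Vars n \<Longrightarrow> vkey n u = vkey n v \<Longrightarrow> u = v"
  unfolding Vars_def by auto

lemma ml_total:
  assumes "m1 \<subseteq> Vars n" "m2 \<subseteq> Vars n" "m1 \<noteq> m2"
  shows "mono_less n m1 m2 \<or> mono_less n m2 m1"
proof -
  define D where "D = (m1 - m2) \<union> (m2 - m1)"
  have fD: "finite D" unfolding D_def using assms by (auto intro: finite_subset)
  have neD: "D \<noteq> {}" unfolding D_def using assms(3) by auto
  have DV: "D \<subseteq> Vars n" unfolding D_def using assms by auto
  obtain v where v: "v \<in> D" "vkey n v = Max (vkey n ` D)"
  proof -
    have "Max (vkey n ` D) \<in> vkey n ` D" using Max_in[of "vkey n ` D"] fD neD by blast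
    then show ?thesis using that by (metis imageE)
  qed
  have vmax: "\<forall>u\<in>D. u \<noteq> v \<longrightarrow> vkey n u < vkey n v"
  proof (intro ballI impI)
    fix u assume u: "u \<in> D" "u \<noteq> v"
    have "vkey n u \<le> vkey n v" using v u fD by auto
    moreover have "vkey n u \<noteq> vkey n v" using vkey_inj[of u n v] u v DV by auto
    ultimately show "vkey n u < vkey n v" by simp
  qed
  show ?thesis
  proof (cases "v \<in> m2")
    case True
    then have "v \<in> m2 - m1" using v unfolding D_def by auto
    then show ?thesis using vmax assms(3) unfolding mono_less_def D_def by blast
  next
    case False
    then have "v \<in> m1 - m2" using v unfolding D_def by auto
    moreover have "(m2 - m1) \<union> (m1 - m2) = D" unfolding D_def by auto
    ultimately show ?thesis using vmax assms(3) unfolding mono_less_def by auto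
  qed
qed

lemma ml_asym: "mono_less n m1 m2 \<Longrightarrow> \<not> mono_less n m2 m1"
  unfolding mono_less_def by (metis DiffD1 DiffD2 UnCI less_asym)

lemma ml_trans:
  assumes V: "m1 \<subseteq> Vars n" "m2 \<subseteq> Vars n" "m3 \<subseteq> Vars n"
    and a: "mono_less n m1 m2" and b: "mono_less n m2 m3"
  shows "mono_less n m1 m3"
proof -
  obtain v where v: "v \<in> m2 - m1" and vm: "\<forall>u \<in> (m1 - m2) \<union> (m2 - m1). u \<noteq> v \<longrightarrow> vkey n u < vkey n v"
    using a unfolding mono_less_def by blast
  obtain w where w: "w \<in> m3 - m2" and wm: "\<forall>u \<in> (m2 - m3) \<union> (m3 - m2). u \<noteq> w \<longrightarrow> vkey n u < vkey n w"
    using b unfolding mono_less_def by blast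
  have vw: "v \<noteq> w" using v w by auto
  have kvw: "vkey n v \<noteq> vkey n w" using vkey_inj[of v n w] v w V vw by auto
  have D13: "(m1 - m3) \<union> (m3 - m1) \<subseteq> ((m1 - m2) \<union> (m2 - m1)) \<union> ((m2 - m3) \<union> (m3 - m2))" by auto
  show ?thesis
  proof (cases "vkey n v < vkey n w")
    case True
    have w1: "w \<notin> m1"
    proof
      assume "w \<in> m1"
      then have "w \<in> (m1 - m2) \<union> (m2 - m1)" using w by auto
      then show False using vm vw True by auto
    qed
    have "\<forall>u \<in> (m1 - m3) \<union> (m3 - m1). u \<noteq> w \<longrightarrow> vkey n u < vkey n w"
    proof (intro ballI impI)
      fix u assume u: "u \<in> (m1 - m3) \<union> (m3 - m1)" "u \<noteq> w"
      show "vkey n u < vkey n w"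
      proof (cases "u \<in> (m1 - m2) \<union> (m2 - m1)")
        case True
        then show ?thesis using vm \<open>vkey n v < vkey n w\<close> by (cases "u = v") auto
      next
        case False
        then show ?thesis using u D13 wm by blast
      qed
    qed
    moreover have "w \<in> m3 - m1" using w w1 by auto
    ultimately show ?thesis unfolding mono_less_def by blast
  next
    case False
    then have lt: "vkey n w < vkey n v" using kvw by simp
    have v3: "v \<in> m3"
    proof (rule ccontr)
      assume "v \<notin> m3"
      then have "v \<in> (m2 - m3) \<union> (m3 - m2)" using v by auto
      then show False using wm vw lt by auto
    qed
    have "\<forall>u \<in> (m1 - m3) \<union> (m3 - m1). u \<noteq> v \<longrightarrow> vkey n u < vkey n v"
    proof (intro ballI impI)
      fix u assume u: "u \<in> (m1 - m3) \<union> (m3 - m1)" "u \<noteq> v"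
      show "vkey n u < vkey n v"
      proof (cases "u \<in> (m2 - m3) \<union> (m3 - m2)")
        case True
        then show ?thesis using wm lt by (cases "u = w") auto
      next
        case False
        then show ?thesis using u D13 vm by blast
      qed
    qed
    moreover have "v \<in> m3 - m1" using v v3 by auto
    ultimately show ?thesis unfolding mono_less_def by blast
  qed
qed

lemma max_exists:
  assumes "finite p" "p \<noteq> {}" "p \<subseteq> Pow (Vars n)"
  shows "\<exists>m\<in>p. \<forall>m'\<in>p. m' \<noteq> m \<longrightarrow> mono_less n m' m"
  using assms
proof (induction p rule: finite_ne_induct)
  case (singleton x)
  then show ?case by auto
next
  case (insert x F)
  then obtain m where m: "m \<in> F" "\<forall>m'\<in>F. m' \<noteq> m \<longrightarrow> mono_less n m' m" by auto
  have xV: "x \<subseteq> Vars n" and mV: "m \<subseteq> Vars n" using insert m by auto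
  have xm: "x \<noteq> m" using m insert by auto
  show ?case
  proof (cases "mono_less n x m")
    case True
    then show ?thesis using m by auto
  next
    case False
    then have mx: "mono_less n m x" using ml_total[OF xV mV xm] by auto
    have "\<forall>m'\<in>insert x F. m' \<noteq> x \<longrightarrow> mono_less n m' x"
    proof (intro ballI impI)
      fix m' assume m': "m' \<in> insert x F" "m' \<noteq> x"
      then have m'F: "m' \<in> F" by auto
      show "mono_less n m' x"
      proof (cases "m' = m")
        case True then show ?thesis using mx by simp
      next
        case False
        then have "mono_less n m' m" using m m'F by auto
        moreover have "m' \<subseteq> Vars n" using m'F insert by auto
        ultimately show ?thesis using ml_trans[OF _ mV xV _ mx] by blast
      qed
    qed
    then show ?thesis by auto
  qed
qed

lemma LM_in:
  assumes "p \<in> bpolys n" "p \<noteq> {}"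
  shows "LM n p \<in> p"
proof -
  have fp: "finite p" using assms(1) by (rule bpolys_finite)
  have pV: "p \<subseteq> Pow (Vars n)" using assms(1) unfolding bpolys_def by auto
  obtain m where m: "m \<in> p" "\<forall>m'\<in>p. m' \<noteq> m \<longrightarrow> mono_less n m' m"
    using max_exists[OF fp assms(2) pV] by blast
  have "LM n p = m"
    unfolding LM_def
  proof (rule the_equality)
    show "m \<in> p \<and> (\<forall>m'\<in>p. m' \<noteq> m \<longrightarrow> mono_less n m' m)" using m by blast
    fix m'' assume h: "m'' \<in> p \<and> (\<forall>m'\<in>p. m' \<noteq> m'' \<longrightarrow> mono_less n m' m'')"
    show "m'' = m"
    proof (rule ccontr)
      assume ne: "m'' \<noteq> m"
      then have "mono_less n m m''" using h m by auto
      moreover have "mono_less n m'' m" using ne h m by auto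
      ultimately show False using ml_asym by blast
    qed
  qed
  then show ?thesis using m by simp
qed


lemma finite_bp_add[simp]: "finite p \<Longrightarrow> finite q \<Longrightarrow> finite (bp_add p q)"
  unfolding bp_add_def by auto
lemma finite_bp_mult[simp]: "finite p \<Longrightarrow> finite q \<Longrightarrow> finite (bp_mult p q)"
proof -
  assume f: "finite p" "finite q"
  have "bp_mult p q \<subseteq> (\<lambda>(a,b). a \<union> b) ` (p \<times> q)"
  proof
    fix m assume "m \<in> bp_mult p q"
    then have "odd (card {(a, b). a \<in> p \<and> b \<in> q \<and> a \<union> b = m})" unfolding bp_mult_def by simp
    then have "{(a, b). a \<in> p \<and> b \<in> q \<and> a \<union> b = m} \<noteq> {}" by (metis card.empty even_zero)
    then obtain a b where "a \<in> p" "b \<in> q" "a \<union> b = m" by auto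
    then show "m \<in> (\<lambda>(a,b). a \<union> b) ` (p \<times> q)" by force
  qed
  then show ?thesis using f by (auto intro: finite_subset)
qed
lemma finite_bp_one[simp]: "finite bp_one" by (simp add: bp_one_def)
lemma finite_bp_zero[simp]: "finite bp_zero" by (simp add: bp_zero_def)
lemma finite_bp_var[simp]: "finite (bp_var v)" by (simp add: bp_var_def)
lemma finite_bp_const[simp]: "finite (bp_const b)" by (simp add: bp_const_def)
lemma finite_phi[simp]: "finite (phi S i)" by (simp add: phi_def)

declare ev_add'[simp del] ev_mult'[simp del] ev_add[simp] ev_mult[simp]

lemma ev_restrict:
  assumes "p \<in> bpolys n"
  shows "ev s p = ev (\<lambda>v. v \<in> Vars n \<and> s v) p"
proof -
  have "{m\<in>p. sat s m} = {m\<in>p. sat (\<lambda>v. v \<in> Vars n \<and> s v) m}"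
    using assms unfolding bpolys_def sat_def by auto
  then show ?thesis unfolding ev_def by simp
qed

lemma vanish:
  assumes g: "g1 \<in> bpolys n" "g2 \<in> bpolys n" "g3 \<in> bpolys n" "g4 \<in> bpolys n"
    and p: "p \<in> bpolys n"
    and z: "\<And>s. (\<forall>v. v \<notin> Vars n \<longrightarrow> \<not> s v) \<Longrightarrow> \<not> ev s g1 \<Longrightarrow> \<not> ev s g2 \<Longrightarrow> \<not> ev s g3 \<Longrightarrow> \<not> ev s g4 \<Longrightarrow> \<not> ev s p"
  shows "p \<in> bideal n {g1, g2, g3, g4}"
proof -
  let ?J = "bideal n {g1, g2, g3, g4}"
  define h where "h = bp_add g1 (bp_mult (bp_add bp_one g1) (bp_add g2 (bp_mult (bp_add bp_one g2) (bp_add g3 (bp_mult (bp_add bp_one g3) g4)))))"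
  have i1: "g1 \<in> ?J" "g2 \<in> ?J" "g3 \<in> ?J" "g4 \<in> ?J" by (auto intro: bideal.gen)
  have "h \<in> ?J" unfolding h_def
    by (intro bideal.add bideal.mult i1) (use g in auto)
  then have hm: "bp_mult p h \<in> ?J" using p by (rule bideal.mult)
  have hp: "h \<in> bpolys n" unfolding h_def using g by simp
  have "bp_mult p h = p"
  proof (rule ev_inj[of _ n])
    show "bp_mult p h \<in> bpolys n" using p hp by simp
    show "p \<in> bpolys n" by (rule p)
    fix s
    let ?s = "\<lambda>v. v \<in> Vars n \<and> s v"
    have fg: "finite g1" "finite g2" "finite g3" "finite g4" using g by (auto dest: bpolys_finite)
    have "ev s h = (ev s g1 \<or> ev s g2 \<or> ev s g3 \<or> ev s g4)" unfolding h_def using fg by auto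
    moreover have "ev s p \<Longrightarrow> ev s g1 \<or> ev s g2 \<or> ev s g3 \<or> ev s g4"
    proof (rule ccontr)
      assume a: "ev s p" "\<not> (ev s g1 \<or> ev s g2 \<or> ev s g3 \<or> ev s g4)"
      have "\<not> ev ?s p"
        by (rule z) (use a g ev_restrict[of g1 n s] ev_restrict[of g2 n s] ev_restrict[of g3 n s] ev_restrict[of g4 n s] in auto)
      then show False using a ev_restrict[OF p, of s] by simp
    qed
    ultimately show "ev s (bp_mult p h) = ev s p" using p hp by (auto simp: ev_mult')
  qed
  then show ?thesis using hm by simp
qed

lemma ev_xi:
  assumes C: "\<And>i. 1 \<le> i \<Longrightarrow> i \<le> n \<Longrightarrow> C i \<in> Vars n" and S: "S \<subseteq> {1..n}"
  shows "xi n S (\<lambda>i. bp_var (C i)) \<in> bpolys n"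
    and "ev s (xi n S (\<lambda>i. bp_var (C i))) = ({i\<in>{1..n}. s (C i)} = S)"
proof -
  have f: "\<And>i. 1 \<le> i \<Longrightarrow> i \<le> n \<Longrightarrow> bp_add (bp_add bp_one (bp_var (C i))) (phi S i) \<in> bpolys n"
    using C by (simp add: bpolys_var phi_def)
  show "xi n S (\<lambda>i. bp_var (C i)) \<in> bpolys n" unfolding xi_def by (rule prod_idx(1)[OF f])
  have e: "ev s (xi n S (\<lambda>i. bp_var (C i))) = (\<forall>i\<in>{1..n}. ev s (bp_add (bp_add bp_one (bp_var (C i))) (phi S i)))"
    unfolding xi_def by (rule prod_idx(2)[OF f])
  have "ev s (xi n S (\<lambda>i. bp_var (C i))) = (\<forall>i\<in>{1..n}. s (C i) = (i \<in> S))"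
    unfolding e by (auto simp: phi_def)
  also have "\<dots> = ({i\<in>{1..n}. s (C i)} = S)" using S by auto
  finally show "ev s (xi n S (\<lambda>i. bp_var (C i))) = ({i\<in>{1..n}. s (C i)} = S)" .
qed

lemma ev_xi_sys:
  assumes C: "\<And>i. 1 \<le> i \<Longrightarrow> i \<le> n \<Longrightarrow> C i \<in> Vars n" and Q: "finite Q" "\<forall>A\<in>Q. A \<subseteq> {1..n}"
  shows "xi_sys n Q (\<lambda>i. bp_var (C i)) \<in> bpolys n"
    and "ev s (xi_sys n Q (\<lambda>i. bp_var (C i))) = ({i\<in>{1..n}. s (C i)} \<notin> Q)"
proof -
  have x1: "\<And>A. A \<in> Q \<Longrightarrow> xi n A (\<lambda>i. bp_var (C i)) \<in> bpolys n"
    using ev_xi(1)[where C=C and n=n] C Q by blast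
  have x2: "\<And>A. A \<in> Q \<Longrightarrow> ev s (xi n A (\<lambda>i. bp_var (C i))) = ({i\<in>{1..n}. s (C i)} = A)"
    using ev_xi(2)[where C=C and n=n] C Q by blast
  have f: "\<And>A. A \<in> Q \<Longrightarrow> bp_add (xi n A (\<lambda>i. bp_var (C i))) bp_one \<in> bpolys n"
    using x1 by simp
  show "xi_sys n Q (\<lambda>i. bp_var (C i)) \<in> bpolys n" unfolding xi_sys_def by (rule prod_set(1)[OF Q(1) f])
  have e: "ev s (xi_sys n Q (\<lambda>i. bp_var (C i))) = (\<forall>A\<in>Q. ev s (bp_add (xi n A (\<lambda>i. bp_var (C i))) bp_one))"
    unfolding xi_sys_def by (rule prod_set(2)[OF Q(1) f])
  have "\<And>A. A \<in> Q \<Longrightarrow> ev s (bp_add (xi n A (\<lambda>i. bp_var (C i))) bp_one) = ({i\<in>{1..n}. s (C i)} \<noteq> A)"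
  proof -
    fix A assume A: "A \<in> Q"
    have "finite (xi n A (\<lambda>i. bp_var (C i)))" using x1[OF A] by (rule bpolys_finite)
    then show "ev s (bp_add (xi n A (\<lambda>i. bp_var (C i))) bp_one) = ({i\<in>{1..n}. s (C i)} \<noteq> A)"
      using x2[OF A] by simp
  qed
  then show "ev s (xi_sys n Q (\<lambda>i. bp_var (C i))) = ({i\<in>{1..n}. s (C i)} \<notin> Q)"
    unfolding e by auto
qed

lemma ev_gamma:
  shows "gamma n (phi F) (\<lambda>i. bp_var (T i)) \<in> bpolys n"
    and "ev s (gamma n (phi F) (\<lambda>i. bp_var (T i))) = (\<not> {i\<in>{1..n}. s (T i)} \<subseteq> F)"
proof -
  have f: "\<And>i. 1 \<le> i \<Longrightarrow> i \<le> n \<Longrightarrow> bp_add (bp_add (bp_mult (phi F i) (bp_var (T i))) (bp_var (T i))) bp_one \<in> bpolys n"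
    by (simp add: phi_def)
  show "gamma n (phi F) (\<lambda>i. bp_var (T i)) \<in> bpolys n" unfolding gamma_def using prod_idx(1)[OF f] by simp
  have e: "ev s (bp_prod_idx n (\<lambda>i. bp_add (bp_add (bp_mult (phi F i) (bp_var (T i))) (bp_var (T i))) bp_one)) = (\<forall>i\<in>{1..n}. ev s (bp_add (bp_add (bp_mult (phi F i) (bp_var (T i))) (bp_var (T i))) bp_one))"
    by (rule prod_idx(2)[OF f])
  have fp: "finite (bp_prod_idx n (\<lambda>i. bp_add (bp_add (bp_mult (phi F i) (bp_var (T i))) (bp_var (T i))) bp_one))"
    using prod_idx(1)[OF f] by (rule bpolys_finite)
  have "ev s (gamma n (phi F) (\<lambda>i. bp_var (T i))) = (\<not> (\<forall>i\<in>{1..n}. ev s (bp_add (bp_add (bp_mult (phi F i) (bp_var (T i))) (bp_var (T i))) bp_one)))"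
    unfolding gamma_def using fp e by simp
  also have "\<dots> = (\<not> {i\<in>{1..n}. s (T i)} \<subseteq> F)"
    by (auto simp: phi_def)
  finally show "ev s (gamma n (phi F) (\<lambda>i. bp_var (T i))) = (\<not> {i\<in>{1..n}. s (T i)} \<subseteq> F)" .
qed

lemma ev_lambda:
  assumes "finite \<F>"
  shows "lambda_poly n \<F> \<in> bpolys n"
    and "ev s (lambda_poly n \<F>) = (\<forall>F\<in>\<F>. \<not> {i\<in>{1..n}. s (T i)} \<subseteq> F)"
proof -
  have f: "\<And>F. F \<in> \<F> \<Longrightarrow> gamma n (phi F) (\<lambda>i. bp_var (T i)) \<in> bpolys n" by (rule ev_gamma(1))
  show "lambda_poly n \<F> \<in> bpolys n" unfolding lambda_poly_def by (rule prod_set(1)[OF assms f])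
  have e: "ev s (lambda_poly n \<F>) = (\<forall>F\<in>\<F>. ev s (gamma n (phi F) (\<lambda>i. bp_var (T i))))"
    unfolding lambda_poly_def by (rule prod_set(2)[OF assms f])
  show "ev s (lambda_poly n \<F>) = (\<forall>F\<in>\<F>. \<not> {i\<in>{1..n}. s (T i)} \<subseteq> F)"
    unfolding e ev_gamma(2) ..
qed

lemma ev_delta:
  shows "delta_poly n \<in> bpolys n"
    and "ev s (delta_poly n) = ({i\<in>{1..n}. s (X i)} \<inter> {i\<in>{1..n}. s (Y i)} \<subseteq> {i\<in>{1..n}. s (T i)})"
proof -
  have f: "\<And>i. 1 \<le> i \<Longrightarrow> i \<le> n \<Longrightarrow> bp_add (bp_add
      (bp_mult (bp_var (T i)) (bp_mult (bp_var (X i)) (bp_var (Y i))))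
      (bp_mult (bp_var (X i)) (bp_var (Y i)))) bp_one \<in> bpolys n"
    by simp
  show "delta_poly n \<in> bpolys n" unfolding delta_poly_def by (rule prod_idx(1)[OF f])
  have e: "ev s (delta_poly n) = (\<forall>i\<in>{1..n}. ev s (bp_add (bp_add
      (bp_mult (bp_var (T i)) (bp_mult (bp_var (X i)) (bp_var (Y i))))
      (bp_mult (bp_var (X i)) (bp_var (Y i)))) bp_one))"
    unfolding delta_poly_def by (rule prod_idx(2)[OF f])
  show "ev s (delta_poly n) = ({i\<in>{1..n}. s (X i)} \<inter> {i\<in>{1..n}. s (Y i)} \<subseteq> {i\<in>{1..n}. s (T i)})"
    unfolding e by auto
qed


theorem mainTheorem4:
  fixes n :: nat and \<Q> \<F> :: "nat set set" and G :: "bpoly set"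
  assumes "\<forall>Q \<in> \<Q>. Q \<subseteq> {1..n}"
    and "fail_prone n \<F>"
    and "is_groebner_basis n G (the_ideal n \<Q> \<F>)"
    and "card (SM n (the_ideal n \<Q> \<F>)) = card \<Q> ^ 2 * card (downclosure \<F>)"
  shows "\<forall>Q1 \<in> \<Q>. \<forall>Q2 \<in> \<Q>. \<forall>F \<in> \<F>. \<not> (Q1 \<inter> Q2 \<subseteq> F)"
proof (rule ccontr)
  assume "\<not> ?thesis"
  then obtain Q1 Q2 F where QF: "Q1 \<in> \<Q>" "Q2 \<in> \<Q>" "F \<in> \<F>" "Q1 \<inter> Q2 \<subseteq> F" by blast
  have Qsub: "\<forall>A\<in>\<Q>. A \<subseteq> {1..n}" using assms(1) by blast
  have finQ: "finite \<Q>" by (rule finite_subset[of _ "Pow {1..n}"]) (use Qsub in auto)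
  have Fsub: "\<forall>A\<in>\<F>. A \<subseteq> {1..n}" using assms(2) unfolding fail_prone_def by blast
  have finF: "finite \<F>" by (rule finite_subset[of _ "Pow {1..n}"]) (use Fsub in auto)
  define DF where "DF = downclosure \<F>"
  have finDF: "finite DF" unfolding DF_def downclosure_def
    by (rule finite_subset[of _ "Pow {1..n}"]) (use Fsub in auto)
  have CX: "\<And>i. 1 \<le> i \<Longrightarrow> i \<le> n \<Longrightarrow> X i \<in> Vars n" by (auto simp: Vars_def)
  have CY: "\<And>i. 1 \<le> i \<Longrightarrow> i \<le> n \<Longrightarrow> Y i \<in> Vars n" by (auto simp: Vars_def)
  define g1 where "g1 = xi_sys n \<Q> (\<lambda>i. bp_var (X i))"
  define g2 where "g2 = xi_sys n \<Q> (\<lambda>i. bp_var (Y i))"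
  define g3 where "g3 = lambda_poly n \<F>"
  define g4 where "g4 = delta_poly n"
  define I where "I = the_ideal n \<Q> \<F>"
  have I_eq: "I = bideal n {g1, g2, g3, g4}" unfolding I_def the_ideal_def g1_def g2_def g3_def g4_def ..
  have gp: "g1 \<in> bpolys n" "g2 \<in> bpolys n" "g3 \<in> bpolys n" "g4 \<in> bpolys n"
    unfolding g1_def g2_def g3_def g4_def
    using ev_xi_sys(1)[OF CX finQ Qsub] ev_xi_sys(1)[OF CY finQ Qsub] ev_lambda(1)[OF finF] ev_delta(1)
    by auto
  define xs where "xs s = {i\<in>{1..n}. s (X i)}" for s :: "var \<Rightarrow> bool"
  define ys where "ys s = {i\<in>{1..n}. s (Y i)}" for s :: "var \<Rightarrow> bool"
  define ts where "ts s = {i\<in>{1..n}. s (T i)}" for s :: "var \<Rightarrow> bool"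
  have e1: "ev s g1 = (xs s \<notin> \<Q>)" for s unfolding g1_def xs_def by (rule ev_xi_sys(2)[OF CX finQ Qsub])
  have e2: "ev s g2 = (ys s \<notin> \<Q>)" for s unfolding g2_def ys_def by (rule ev_xi_sys(2)[OF CY finQ Qsub])
  have e3: "ev s g3 = (ts s \<notin> DF)" for s
    unfolding g3_def ts_def ev_lambda(2)[OF finF] DF_def downclosure_def by auto
  have e4: "ev s g4 = (xs s \<inter> ys s \<subseteq> ts s)" for s
    unfolding g4_def xs_def ys_def ts_def by (rule ev_delta(2))
  define V where "V = {s. (\<forall>v. v \<notin> Vars n \<longrightarrow> \<not> s v) \<and> \<not> ev s g1 \<and> \<not> ev s g2 \<and> \<not> ev s g3 \<and> \<not> ev s g4}"
  define tau where "tau s = (xs s, ys s, ts s)" for s :: "var \<Rightarrow> bool"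
  have inj: "inj_on tau V"
  proof (rule inj_onI)
    fix s1 s2 assume s: "s1 \<in> V" "s2 \<in> V" "tau s1 = tau s2"
    show "s1 = s2"
    proof
      fix v show "s1 v = s2 v"
      proof (cases "v \<in> Vars n")
        case False then show ?thesis using s unfolding V_def by auto
      next
        case True
        then obtain i where i: "1 \<le> i" "i \<le> n" "v = X i \<or> v = Y i \<or> v = T i" unfolding Vars_def by auto
        have "xs s1 = xs s2" "ys s1 = ys s2" "ts s1 = ts s2" using s(3) unfolding tau_def by auto
        then show ?thesis using i unfolding xs_def ys_def ts_def by (auto simp: set_eq_iff)
      qed
    qed
  qed
  have img: "tau ` V \<subseteq> (\<Q> \<times> \<Q> \<times> DF) - {(Q1, Q2, F)}"
    unfolding V_def tau_def using e1 e2 e3 e4 QF by auto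
  have finP: "finite ((\<Q> \<times> \<Q> \<times> DF) - {(Q1, Q2, F)})" using finQ finDF by auto
  have finV: "finite V" using finite_imageD[OF finite_subset[OF img finP] inj] .
  have FDF: "F \<in> DF" unfolding DF_def downclosure_def using QF by auto
  have "card V = card (tau ` V)" using card_image[OF inj] by simp
  also have "\<dots> \<le> card ((\<Q> \<times> \<Q> \<times> DF) - {(Q1, Q2, F)})" by (rule card_mono[OF finP img])
  also have "\<dots> < card (\<Q> \<times> \<Q> \<times> DF)"
    by (rule card_Diff1_less) (use finQ finDF QF FDF in auto)
  also have "\<dots> = card \<Q> ^ 2 * card DF" by (simp add: card_cartesian_product power2_eq_square)
  finally have Vlt: "card V < card \<Q> ^ 2 * card DF" .
  have van: "p \<in> I" if p: "p \<in> bpolys n" and z: "\<forall>s\<in>V. \<not> ev s p" for p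
    unfolding I_eq by (rule vanish[OF gp p]) (use z in \<open>auto simp: V_def\<close>)
  define SMI where "SMI = SM n I"
  have SMV: "SMI \<subseteq> Pow (Vars n)" unfolding SMI_def SM_def by auto
  have finSM: "finite SMI" using SMV by (auto intro: finite_subset)
  have "card SMI \<le> card V"
  proof (rule ccontr)
    assume "\<not> card SMI \<le> card V"
    then have lt: "card V < card SMI" by simp
    define Phi where "Phi S = restrict (\<lambda>s. ev s S) V" for S
    have sub: "Phi ` Pow SMI \<subseteq> PiE V (\<lambda>_. UNIV :: bool set)" unfolding Phi_def by auto
    have cP: "card (PiE V (\<lambda>_. UNIV :: bool set)) = 2 ^ card V"
      using card_PiE[OF finV, of "\<lambda>_. UNIV :: bool set"] by simp
    have finPi: "finite (PiE V (\<lambda>_. UNIV :: bool set))" using finV by (simp add: finite_PiE)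
    have "\<not> inj_on Phi (Pow SMI)"
    proof
      assume "inj_on Phi (Pow SMI)"
      then have "card (Pow SMI) \<le> card (PiE V (\<lambda>_. UNIV :: bool set))"
        using card_inj_on_le[OF _ sub finPi] by blast
      then have "2 ^ card SMI \<le> (2::nat) ^ card V" using cP card_Pow[of SMI] finSM by simp
      then show False using lt by simp
    qed
    then obtain S1 S2 where S: "S1 \<subseteq> SMI" "S2 \<subseteq> SMI" "S1 \<noteq> S2" "Phi S1 = Phi S2"
      unfolding inj_on_def by blast
    have S1p: "S1 \<in> bpolys n" "S2 \<in> bpolys n" using S SMV unfolding bpolys_def by auto
    define p where "p = bp_add S1 S2"
    have pp: "p \<in> bpolys n" unfolding p_def using S1p by simp
    have pne: "p \<noteq> {}" unfolding p_def bp_add_def using S(3) by auto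
    have "\<forall>s\<in>V. \<not> ev s p"
    proof
      fix s assume sV: "s \<in> V"
      have "Phi S1 s = Phi S2 s" using S(4) by simp
      then have "ev s S1 = ev s S2" using sV unfolding Phi_def by simp
      then show "\<not> ev s p" unfolding p_def using S1p by (simp add: ev_add')
    qed
    then have pI: "p \<in> I" using van[OF pp] by blast
    have "LM n p \<in> p" by (rule LM_in[OF pp pne])
    moreover have "p \<subseteq> SMI" unfolding p_def bp_add_def using S by auto
    ultimately have "LM n p \<in> SMI" by blast
    moreover have "{LM n p} \<in> bideal n {{LM n f} | f. f \<in> I \<and> f \<noteq> bp_zero}"
      by (rule bideal.gen) (use pI pne in \<open>auto simp: bp_zero_def\<close>)
    ultimately show False unfolding SMI_def SM_def by blast
  qed
  then have "card SMI < card \<Q> ^ 2 * card DF" using Vlt by simp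
  then show False using assms(4) unfolding SMI_def I_def DF_def by simp
qed

end
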